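(* Let $H$ be an abelian subgroup of $\operatorname{Sym}_n$ and let $S=S_n(H)$. Then $S$ is cancellative if and only if $H_1=H_n=\{\mathrm{id}\}$.
   Context: For a subset $H\subseteq \operatorname{Sym}_n$, $S_n(H)$ denotes the monoid with presentation $\langle a_1,\dots,a_n \mid a_1a_2\cdots a_n = a_{\sigma(1)}a_{\sigma(2)}\cdots a_{\sigma(n)},\ \sigma\in H\rangle$. For a subgroup $H$ of $\operatorname{Sym}_n$ and $1\leq i\leq n$, $H_i=\{\sigma\in H\mid \sigma(i)=i\}$ is the stabilizer of $i$ in $H$; $\mathrm{id}$ is the identity permutation. A monoid is cancellative if it is both left and right cancellative. *)

theory Defs
  imports "HOL-Algebra.Sym_Groups"
begin

text \<open>Words over the alphabet a_1,...,a_n are lists of indices in {1..n}.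
  The word a_1 a_2 ... a_n is [1..<Suc n]; the word a_{s(1)} ... a_{s(n)} is map s [1..<Suc n].\<close>

definition base_word :: "nat \<Rightarrow> nat list" where
  "base_word n = [1..<Suc n]"

definition perm_word :: "nat \<Rightarrow> (nat \<Rightarrow> nat) \<Rightarrow> nat list" where
  "perm_word n s = map s [1..<Suc n]"

inductive pres_eq :: "nat \<Rightarrow> (nat \<Rightarrow> nat) set \<Rightarrow> nat list \<Rightarrow> nat list \<Rightarrow> bool"
  for n :: nat and H :: "(nat \<Rightarrow> nat) set" where
  rel: "s \<in> H \<Longrightarrow> pres_eq n H (u @ base_word n @ v) (u @ perm_word n s @ v)"
| refl: "pres_eq n H w w"
| sym: "pres_eq n H w w' \<Longrightarrow> pres_eq n H w' w"
| trans: "pres_eq n H w w' \<Longrightarrow> pres_eq n H w' w'' \<Longrightarrow> pres_eq n H w w''"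

definition words :: "nat \<Rightarrow> nat list set" where
  "words n = {w. set w \<subseteq> {1..n}}"

definition cancellative_pres :: "nat \<Rightarrow> (nat \<Rightarrow> nat) set \<Rightarrow> bool" where
  "cancellative_pres n H \<longleftrightarrow>
     (\<forall>u\<in>words n. \<forall>v\<in>words n. \<forall>w\<in>words n.
        (pres_eq n H (u @ v) (u @ w) \<longrightarrow> pres_eq n H v w) \<and>
        (pres_eq n H (v @ u) (w @ u) \<longrightarrow> pres_eq n H v w))"

definition stabilizer :: "(nat \<Rightarrow> nat) set \<Rightarrow> nat \<Rightarrow> (nat \<Rightarrow> nat) set" where
  "stabilizer H i = {s \<in> H. s i = i}"

end

theory Submission imports Defs begin
definition step :: "nat list set \<Rightarrow> nat list \<Rightarrow> nat list \<Rightarrow> bool" where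
  "step W u v \<longleftrightarrow> (\<exists>a b p q. p \<in> W \<and> q \<in> W \<and> u = a @ p @ b \<and> v = a @ q @ b)"

abbreviation E where "E W \<equiv> (step W)\<^sup>*\<^sup>*"

lemma step_sym: "step W u v \<Longrightarrow> step W v u"
  unfolding step_def by blast

lemma E_sym: "E W u v \<Longrightarrow> E W v u"
proof (induction rule: rtranclp_induct)
  case base then show ?case by simp
next
  case (step y z) then show ?case
    by (meson converse_rtranclp_into_rtranclp step_sym)
qed

lemma step_prefix: "step W u v \<Longrightarrow> step W (c @ u) (c @ v)"
  unfolding step_def by (metis append.assoc)

lemma E_prefix: "E W u v \<Longrightarrow> E W (c @ u) (c @ v)"
proof (induction rule: rtranclp_induct)
  case base then show ?case by simp
next
  case (step y z) then show ?case
    by (meson rtranclp.rtrancl_into_rtrancl step_prefix)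
qed

lemma step_len: assumes "\<forall>p\<in>W. \<forall>q\<in>W. length p = length q" "step W u v" shows "length u = length v"
proof -
  obtain a b p q where "p \<in> W" "q \<in> W" "u = a @ p @ b" "v = a @ q @ b" using assms(2) unfolding step_def by blast
  moreover from calculation have "length p = length q" using assms(1) by blast
  ultimately show ?thesis by simp
qed

lemma E_len: assumes "\<forall>p\<in>W. \<forall>q\<in>W. length p = length q" "E W u v" shows "length u = length v"
  using assms(2)
proof (induction rule: rtranclp_induct)
  case base then show ?case by simp
next
  case (step y z) then show ?case using step_len[OF assms(1)] by metis
qed

definition Q where "Q W x u y v \<longleftrightarrow> (x = y \<and> E W u v) \<or>
   (\<exists>p q z. p \<in> W \<and> q \<in> W \<and> p \<noteq> [] \<and> q \<noteq> [] \<and> hd p = x \<and> hd q = y \<and>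
       E W u (tl p @ z) \<and> E W v (tl q @ z))"

locale goodW =
  fixes W :: "nat list set"
  assumes len: "\<forall>p\<in>W. \<forall>q\<in>W. length p = length q"
    and hdinj: "\<And>p q. p \<in> W \<Longrightarrow> q \<in> W \<Longrightarrow> p \<noteq> q \<Longrightarrow> p \<noteq> [] \<and> q \<noteq> [] \<and> hd p \<noteq> hd q"
begin

lemma Q_same: assumes "Q W x u x v" shows "E W u v"
proof -
  { fix p q z assume "p \<in> W" "q \<in> W" "hd p = x" "hd q = x" "E W u (tl p @ z)" "E W v (tl q @ z)"
    then have "p = q" using hdinj by metis
    then have "E W u v" using \<open>E W u (tl p @ z)\<close> \<open>E W v (tl q @ z)\<close>
      by (metis E_sym rtranclp_trans) }
  then show ?thesis using assms unfolding Q_def by blast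
qed

lemma mainP: "\<forall>x u y v. length u = m \<longrightarrow> E W (x#u) (y#v) \<longrightarrow> Q W x u y v"
proof (induction m rule: less_induct)
  case (less m)
  have c1: "E W b z" if "E W (c # b) (c # z)" "length b < m" for c b z
    using less that Q_same by blast
  have cp: "E W b z" if "E W (c @ b) (c @ z)" "length (c @ b) \<le> m" for c b z
    using that
  proof (induction c)
    case Nil then show ?case by simp
  next
    case (Cons c0 c')
    have "E W (c' @ b) (c' @ z)" using c1[of c0 "c' @ b" "c' @ z"] Cons.prems by simp
    then show ?case using Cons by simp
  qed
  show ?case
  proof (intro allI impI)
    fix x u y v assume lu: "length u = m" and e: "E W (x#u) (y#v)"
    have "\<forall>y v. w = y # v \<longrightarrow> Q W x u y v" if "E W (x#u) w" for w
      using that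
    proof (induction rule: rtranclp_induct)
      case base then show ?case unfolding Q_def by simp
    next
      case (step w1 w)
      show ?case
      proof (intro allI impI)
        fix y v assume wy: "w = y # v"
        have "length w1 = length w" using step_len[OF len step(2)] .
        then obtain y1 v1 where w1: "w1 = y1 # v1" using wy by (cases w1) auto
        have Q1: "Q W x u y1 v1" using step(3) w1 by simp
        have lv1: "length v1 = m" using E_len[OF len step(1)] w1 lu by simp
        obtain a b p q where pq: "p \<in> W" "q \<in> W" "w1 = a @ p @ b" "w = a @ q @ b"
          using step(2) unfolding step_def by blast
        show "Q W x u y v"
        proof (cases "p = q")
          case True then have "y1 # v1 = y # v" using pq w1 wy by simp
          then have "y1 = y" "v1 = v" by simp_all
          then show ?thesis using Q1 by simp
        next
          case False
          then have ne: "p \<noteq> []" "q \<noteq> []" "hd p \<noteq> hd q" using hdinj pq by auto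
          show ?thesis
          proof (cases a)
            case Nil
            have y1: "y1 = hd p" "v1 = tl p @ b" using pq w1 Nil ne by (cases p; auto)+
            have y: "y = hd q" "v = tl q @ b" using pq wy Nil ne by (cases q; auto)+
            from Q1 consider "x = y1" "E W u v1" | p' q' z where "p' \<in> W" "q' \<in> W" "p' \<noteq> []" "q' \<noteq> []" "hd p' = x" "hd q' = y1"
                "E W u (tl p' @ z)" "E W v1 (tl q' @ z)" unfolding Q_def by blast
            then show ?thesis
            proof cases
              case 1 assume "x = y1" "E W u v1"
              then show ?thesis unfolding Q_def using pq ne y1 y by blast
            next
              case (2 p' q' z) note h = this
              have "q' = p" using h hdinj pq y1 by metis
              then have "E W (tl p @ b) (tl p @ z)" using h y1 by simp
              moreover have "length (tl p @ b) \<le> m" using lv1 y1 by simp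
              ultimately have "E W b z" using cp by blast
              then have "E W v (tl q @ z)" using y E_prefix by simp
              then show ?thesis unfolding Q_def using h pq ne y by blast
            qed
          next
            case (Cons a0 a')
            have yy: "y1 = y" "v1 = a' @ p @ b" "v = a' @ q @ b" using pq w1 wy Cons by auto
            have sv: "step W v v1" using yy pq unfolding step_def by blast
            from Q1 consider "x = y1" "E W u v1" | p' q' z where "p' \<in> W" "q' \<in> W" "p' \<noteq> []" "q' \<noteq> []" "hd p' = x" "hd q' = y1"
                "E W u (tl p' @ z)" "E W v1 (tl q' @ z)" unfolding Q_def by blast
            then show ?thesis
            proof cases
              case 1 assume "x = y1" "E W u v1"
              then show ?thesis unfolding Q_def using yy sv
                by (metis E_sym r_into_rtranclp rtranclp_trans)
            next
              case (2 p' q' z) note h = this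
              have "E W v (tl q' @ z)" using h(8) sv by (meson converse_rtranclp_into_rtranclp)
              then show ?thesis unfolding Q_def using h yy by blast
            qed
          qed
        qed
      qed
    qed
    then show "Q W x u y v" using e by blast
  qed
qed

lemma cancel_left: "E W (c @ u) (c @ v) \<Longrightarrow> E W u v"
proof (induction c)
  case Nil then show ?case by simp
next
  case (Cons c0 c)
  then have "E W (c0 # (c @ u)) (c0 # (c @ v))" by simp
  then have "E W (c @ u) (c @ v)" using mainP Q_same by blast
  then show ?case using Cons.IH by simp
qed

end

lemma E_rev: "E W u v \<Longrightarrow> E (rev ` W) (rev u) (rev v)"
proof (induction rule: rtranclp_induct)
  case base then show ?case by simp
next
  case (step y z)
  then obtain a b p q where "p \<in> W" "q \<in> W" "y = a @ p @ b" "z = a @ q @ b"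
    unfolding step_def by blast
  then have "step (rev ` W) (rev y) (rev z)" unfolding step_def
    by (intro exI[of _ "rev b"] exI[of _ "rev a"] exI[of _ "rev p"] exI[of _ "rev q"]) auto
  then show ?case using step by (meson rtranclp.rtrancl_into_rtrancl)
qed

lemma cancel_right:
  assumes "\<forall>p\<in>W. \<forall>q\<in>W. length p = length q"
    and "\<And>p q. p \<in> W \<Longrightarrow> q \<in> W \<Longrightarrow> p \<noteq> q \<Longrightarrow> p \<noteq> [] \<and> q \<noteq> [] \<and> last p \<noteq> last q"
    and "E W (u @ c) (v @ c)"
  shows "E W u v"
proof -
  interpret goodW "rev ` W"
  proof
    show "\<forall>p\<in>rev ` W. \<forall>q\<in>rev ` W. length p = length q"
    proof (intro ballI)
      fix p q assume "p \<in> rev ` W" "q \<in> rev ` W"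
      then obtain p' q' where "p' \<in> W" "q' \<in> W" "p = rev p'" "q = rev q'" by blast
      moreover from calculation have "length p' = length q'" using assms(1) by blast
      ultimately show "length p = length q" by simp
    qed
    fix p q assume "p \<in> rev ` W" "q \<in> rev ` W" "p \<noteq> q"
    then obtain p' q' where pq: "p' \<in> W" "q' \<in> W" "p = rev p'" "q = rev q'" by blast
    then have "p' \<noteq> q'" using \<open>p \<noteq> q\<close> by blast
    then have "p' \<noteq> [] \<and> q' \<noteq> [] \<and> last p' \<noteq> last q'" using assms(2) pq(1,2) by blast
    then show "p \<noteq> [] \<and> q \<noteq> [] \<and> hd p \<noteq> hd q" using pq by (simp add: hd_rev)
  qed
  have "E (rev ` W) (rev c @ rev u) (rev c @ rev v)" using E_rev[OF assms(3)] by simp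
  then have "E (rev ` W) (rev u) (rev v)" by (rule cancel_left)
  then have "E (rev ` rev ` W) (rev (rev u)) (rev (rev v))" by (rule E_rev)
  then show ?thesis by (simp add: image_image)
qed

lemma pres_eq_E:
  assumes "id \<in> H"
  shows "pres_eq n H u v \<longleftrightarrow> E (perm_word n ` H) u v"
proof
  have bw: "base_word n = perm_word n id" unfolding base_word_def perm_word_def by simp
  show "pres_eq n H u v \<Longrightarrow> E (perm_word n ` H) u v"
  proof (induction rule: pres_eq.induct)
    case (rel s u v)
    then have "step (perm_word n ` H) (u @ base_word n @ v) (u @ perm_word n s @ v)"
      unfolding step_def bw using assms by blast
    then show ?case by blast
  next
    case (refl w) then show ?case by simp
  next
    case (sym w w') then show ?case using E_sym by blast
  next
    case (trans w w' w'') then show ?case by simp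
  qed
  show "E (perm_word n ` H) u v \<Longrightarrow> pres_eq n H u v"
  proof (induction rule: rtranclp_induct)
    case base then show ?case by (rule pres_eq.refl)
  next
    case (step y z)
    then obtain a b s t where st: "s \<in> H" "t \<in> H" "y = a @ perm_word n s @ b" "z = a @ perm_word n t @ b"
      unfolding step_def by blast
    have "pres_eq n H y (a @ base_word n @ b)" using st pres_eq.rel pres_eq.sym by metis
    moreover have "pres_eq n H (a @ base_word n @ b) z" using st pres_eq.rel by metis
    ultimately show ?case using step pres_eq.trans by metis
  qed
qed

lemma E_short: assumes "\<forall>p\<in>W. length p = n" "E W u v" "length u < n" shows "u = v"
  using assms(2,3)
proof (induction rule: rtranclp_induct)
  case base then show ?case by simp
next
  case (step y z)
  then obtain a b p q where "p \<in> W" "y = a @ p @ b" unfolding step_def by blast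
  then show ?case using step assms(1) by auto
qed

lemma len_pw: "length (perm_word n s) = n" unfolding perm_word_def by simp

lemma lv: "(n::nat) \<ge> 1 \<Longrightarrow> [1..<Suc n] = 1 # [2..<Suc n]"
proof -
  assume "n \<ge> 1"
  then have "[1..<Suc n] = 1 # [Suc 1..<Suc n]" by (intro upt_conv_Cons) simp
  then show ?thesis by (simp only: Suc_1)
qed

lemma hd_pw: "n \<ge> 1 \<Longrightarrow> hd (perm_word n s) = s 1"
  unfolding perm_word_def using lv[of n] by simp

lemma last_pw: "n \<ge> 1 \<Longrightarrow> last (perm_word n s) = s n"
  unfolding perm_word_def by (simp add: last_map)

lemma stab_inj:
  assumes sg: "subgroup H (sym_group n)" and st: "stabilizer H i = {id}"
    and s: "s \<in> H" and t: "t \<in> H" and eq: "s i = t i"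
  shows "s = t"
proof -
  have G: "group (sym_group n)" by (rule sym_group_is_group)
  have tc: "t permutes {1..n}" using subgroup.mem_carrier[OF sg t] sym_group_carrier by blast
  have "inv\<^bsub>sym_group n\<^esub> t \<in> H" using subgroup.m_inv_closed[OF sg t] .
  then have "inv' t \<in> H" using subgroup.mem_carrier[OF sg t] by simp
  then have "inv' t \<circ> s \<in> H" using subgroup.m_closed[OF sg _ s] by (simp add: sym_group_mult)
  moreover have "(inv' t \<circ> s) i = i" using eq permutes_inverses(2)[OF tc] by simp
  ultimately have "inv' t \<circ> s \<in> stabilizer H i" unfolding stabilizer_def by simp
  then have "inv' t \<circ> s = id" using st by simp
  then have "t \<circ> (inv' t \<circ> s) = t" by simp
  then show ?thesis using permutes_inv_o(1)[OF tc] by (simp add: o_assoc)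
qed

lemma pw_eq: "perm_word n s \<noteq> perm_word n t \<Longrightarrow> n \<ge> 1"
  unfolding perm_word_def by (cases n) auto

lemma n_pos: assumes "s permutes {1..(n::nat)}" "s \<noteq> id" shows "n \<ge> 1"
proof (rule ccontr)
  assume "\<not> n \<ge> 1"
  then have "n = 0" by simp
  then have "{1..n} = {}" by simp
  then have "s = id" using assms(1) permutes_empty by metis
  then show False using assms(2) by simp
qed

lemma fix_all: assumes "s permutes {1..(n::nat)}" "\<forall>i\<in>{1..n}. s i = i" shows "s = id"
proof
  fix i show "s i = id i"
  proof (cases "i \<in> {1..n}")
    case True then show ?thesis using assms(2) by simp
  next
    case False then show ?thesis using permutes_not_in[OF assms(1)] by simp
  qed
qed

lemma fwd:
  assumes sg: "subgroup H (sym_group n)" and R: "stabilizer H 1 = {id}" "stabilizer H n = {id}"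
  shows "cancellative_pres n H"
proof -
  have idH: "id \<in> H" using subgroup.one_closed[OF sg] by (simp add: sym_group_one)
  define W where "W = perm_word n ` H"
  have lenW: "\<forall>p\<in>W. \<forall>q\<in>W. length p = length q"
    unfolding W_def by (auto simp: len_pw)
  have eqE: "\<And>u v. pres_eq n H u v \<longleftrightarrow> E W u v" unfolding W_def using pres_eq_E[OF idH] by blast
  have key: "p \<noteq> [] \<and> q \<noteq> [] \<and> hd p \<noteq> hd q \<and> last p \<noteq> last q" if pqW: "p \<in> W" "q \<in> W" "p \<noteq> q" for p q
  proof -
    obtain s t where st: "s \<in> H" "t \<in> H" "p = perm_word n s" "q = perm_word n t" using pqW unfolding W_def by blast
    have n1: "n \<ge> 1" using st pqW(3) pw_eq by blast
    have "s \<noteq> t" using st pqW(3) by blast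
    then have "s 1 \<noteq> t 1" "s n \<noteq> t n" using stab_inj[OF sg R(1) st(1,2)] stab_inj[OF sg R(2) st(1,2)] by blast+
    moreover have "length p = n" "length q = n" using st len_pw by simp_all
    moreover have "hd p = s 1" "hd q = t 1" "last p = s n" "last q = t n"
      using st hd_pw[OF n1] last_pw[OF n1] by simp_all
    ultimately show ?thesis using n1 by auto
  qed
  interpret goodW W
  proof
    show "\<forall>p\<in>W. \<forall>q\<in>W. length p = length q" by (rule lenW)
    fix p q assume "p \<in> W" "q \<in> W" "p \<noteq> q"
    then show "p \<noteq> [] \<and> q \<noteq> [] \<and> hd p \<noteq> hd q" using key by blast
  qed
  have lastW: "\<And>p q. p \<in> W \<Longrightarrow> q \<in> W \<Longrightarrow> p \<noteq> q \<Longrightarrow> p \<noteq> [] \<and> q \<noteq> [] \<and> last p \<noteq> last q"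
    using key by blast
  show ?thesis unfolding cancellative_pres_def eqE
  proof (intro ballI conjI impI)
    fix u v w assume "E W (u @ v) (u @ w)" then show "E W v w" by (rule cancel_left)
  next
    fix u v w assume "E W (v @ u) (w @ u)" then show "E W v w" using cancel_right[OF lenW lastW] by blast
  qed
qed

lemma bwd1:
  assumes sg: "subgroup H (sym_group n)" and C: "cancellative_pres n H"
  shows "stabilizer H 1 = {id}"
proof (rule ccontr)
  have idH: "id \<in> H" using subgroup.one_closed[OF sg] by (simp add: sym_group_one)
  have lenW: "\<forall>p\<in>perm_word n ` H. length p = n" by (auto simp: len_pw)
  assume "stabilizer H 1 \<noteq> {id}"
  then obtain s where s: "s \<in> H" "s 1 = 1" "s \<noteq> id" using idH unfolding stabilizer_def by auto
  have sp: "s permutes {1..n}" using subgroup.mem_carrier[OF sg s(1)] sym_group_carrier by blast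
  have n1: "n \<ge> 1" using n_pos[OF sp s(3)] .
  define v where "v = [2..<Suc n]"
  define w where "w = map s [2..<Suc n]"
  have bw: "base_word n = [1] @ v" unfolding base_word_def v_def using lv[OF n1] by simp
  have pw: "perm_word n s = [1] @ w" unfolding perm_word_def w_def using lv[OF n1] s(2) by simp
  have "pres_eq n H ([] @ base_word n @ []) ([] @ perm_word n s @ [])" by (rule pres_eq.rel[OF s(1)])
  then have e: "pres_eq n H ([1] @ v) ([1] @ w)" using bw pw by simp
  have img: "\<And>i. i \<in> {1..n} \<Longrightarrow> s i \<in> {1..n}" using permutes_in_image[OF sp] by blast
  have "[1] \<in> words n" using n1 unfolding words_def by simp
  have "v \<in> words n" unfolding words_def v_def by auto
  have "set w \<subseteq> {1..n}" unfolding w_def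
  proof
    fix x assume "x \<in> set (map s [2..<Suc n])"
    then obtain i where "i \<in> set [2..<Suc n]" "x = s i" by auto
    then have "i \<in> {2..n}" "x = s i" by auto
    then show "x \<in> {1..n}" using img[of i] by auto
  qed
  then have "w \<in> words n" unfolding words_def by simp
  note wm = this
  have CL: "\<And>u v w. u \<in> words n \<Longrightarrow> v \<in> words n \<Longrightarrow> w \<in> words n \<Longrightarrow> pres_eq n H (u@v) (u@w) \<Longrightarrow> pres_eq n H v w"
    using C unfolding cancellative_pres_def by blast
  have "pres_eq n H v w" by (rule CL[OF \<open>[1] \<in> words n\<close> \<open>v \<in> words n\<close> wm e])
  then have "E (perm_word n ` H) v w" using pres_eq_E[OF idH] by simp
  moreover have "length v < n"
  proof -
    have "length v = Suc n - 2" unfolding v_def by (simp only: length_upt)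
    then show ?thesis using n1 by arith
  qed
  ultimately have "v = w" by (rule E_short[OF lenW])
  then have "map id v = w" by simp
  then have "map s [2..<Suc n] = map id [2..<Suc n]" unfolding v_def w_def by (rule HOL.sym)
  then have fx: "\<forall>i\<in>set [2..<Suc n]. s i = id i" by (simp only: map_eq_conv)
  have "\<forall>i\<in>{1..n}. s i = i"
  proof
    fix i assume i: "i \<in> {1..n}"
    show "s i = i"
    proof (cases "i = 1")
      case True then show ?thesis using s(2) by simp
    next
      case False then have "i \<in> set [2..<Suc n]" using i by auto
      then have "s i = id i" by (rule bspec[OF fx])
      then show ?thesis by simp
    qed
  qed
  then have "s = id" by (rule fix_all[OF sp])
  then show False using s(3) by simp
qed

lemma bwdn:
  assumes sg: "subgroup H (sym_group n)" and C: "cancellative_pres n H"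
  shows "stabilizer H n = {id}"
proof (rule ccontr)
  have idH: "id \<in> H" using subgroup.one_closed[OF sg] by (simp add: sym_group_one)
  have lenW: "\<forall>p\<in>perm_word n ` H. length p = n" by (auto simp: len_pw)
  assume "stabilizer H n \<noteq> {id}"
  then obtain s where s: "s \<in> H" "s n = n" "s \<noteq> id" using idH unfolding stabilizer_def by auto
  have sp: "s permutes {1..n}" using subgroup.mem_carrier[OF sg s(1)] sym_group_carrier by blast
  have n1: "n \<ge> 1" using n_pos[OF sp s(3)] .
  define v where "v = [1..<n]"
  define w where "w = map s [1..<n]"
  have bw: "base_word n = v @ [n]" unfolding base_word_def v_def using n1 by simp
  have pw: "perm_word n s = w @ [n]" unfolding perm_word_def w_def using n1 s(2) by simp
  have "pres_eq n H ([] @ base_word n @ []) ([] @ perm_word n s @ [])" by (rule pres_eq.rel[OF s(1)])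
  then have e: "pres_eq n H (v @ [n]) (w @ [n])" using bw pw by simp
  have img: "\<And>i. i \<in> {1..n} \<Longrightarrow> s i \<in> {1..n}" using permutes_in_image[OF sp] by blast
  have "[n] \<in> words n" using n1 unfolding words_def by simp
  have "v \<in> words n" unfolding words_def v_def by auto
  have "set w \<subseteq> {1..n}" unfolding w_def
  proof
    fix x assume "x \<in> set (map s [1..<n])"
    then obtain i where "i \<in> set [1..<n]" "x = s i" by auto
    then have "i \<in> {1..<n}" "x = s i" by auto
    then show "x \<in> {1..n}" using img[of i] by auto
  qed
  then have "w \<in> words n" unfolding words_def by simp
  note wm = this
  have CR: "\<And>u v w. u \<in> words n \<Longrightarrow> v \<in> words n \<Longrightarrow> w \<in> words n \<Longrightarrow> pres_eq n H (v@u) (w@u) \<Longrightarrow> pres_eq n H v w"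
    using C unfolding cancellative_pres_def by blast
  have "pres_eq n H v w" by (rule CR[OF \<open>[n] \<in> words n\<close> \<open>v \<in> words n\<close> wm e])
  then have "E (perm_word n ` H) v w" using pres_eq_E[OF idH] by simp
  moreover have "length v < n" unfolding v_def using n1 by simp
  ultimately have "v = w" by (rule E_short[OF lenW])
  then have "map id v = w" by simp
  then have "map s [1..<n] = map id [1..<n]" unfolding v_def w_def by (rule HOL.sym)
  then have fx: "\<forall>i\<in>set [1..<n]. s i = id i" by (simp only: map_eq_conv)
  have "\<forall>i\<in>{1..n}. s i = i"
  proof
    fix i assume i: "i \<in> {1..n}"
    show "s i = i"
    proof (cases "i = n")
      case True then show ?thesis using s(2) by simp
    next
      case False then have "i \<in> set [1..<n]" using i by auto
      then have "s i = id i" by (rule bspec[OF fx])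
      then show ?thesis by simp
    qed
  qed
  then have "s = id" by (rule fix_all[OF sp])
  then show False using s(3) by simp
qed

theorem theorem3p1:
  fixes n :: nat and H :: "(nat \<Rightarrow> nat) set"
  assumes "subgroup H (sym_group n)"
    and "\<forall>s\<in>H. \<forall>t\<in>H. s \<circ> t = t \<circ> s"
  shows "cancellative_pres n H \<longleftrightarrow> stabilizer H 1 = {id} \<and> stabilizer H n = {id}"
  using fwd[OF assms(1)] bwd1[OF assms(1)] bwdn[OF assms(1)] by blast

end
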